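(* Let $E$ be an Archimedean vector lattice and suppose $(J_n)_{n\in\mathbb N}$ are uniformly closed ideals of $E$ such that the quotient vector lattice $E/J_n$ has the countable sup property for each $n$. If $\bigcap_{n=1}^\infty J_n=\{0\}$, then $E$ has the countable sup property.
   Context: An ideal $J$ of $E$ is uniformly closed if it is closed under relatively uniform limits (limits $x_k\to x$ for which there is $u\ge0$ and $\varepsilon_k\to0$ with $|x_k-x|\le\varepsilon_k u$). A vector lattice has the countable sup property if every nonempty subset possessing a supremum contains a countable subset with the same supremum. *)

theory Defs
  imports "HOL-Analysis.Analysis"
begin

definition vabs :: "'a::{ordered_real_vector, lattice} \<Rightarrow> 'a" where
  "vabs x = sup x (- x)"

definition archimedean_vl :: "'a::{ordered_real_vector, lattice} itself \<Rightarrow> bool" where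
  "archimedean_vl _ \<longleftrightarrow>
     (\<forall>x y :: 'a. 0 \<le> x \<longrightarrow> (\<forall>n::nat. of_nat n *\<^sub>R x \<le> y) \<longrightarrow> x = 0)"

definition vl_ideal :: "'a::{ordered_real_vector, lattice} set \<Rightarrow> bool" where
  "vl_ideal J \<longleftrightarrow> 0 \<in> J \<and> (\<forall>x\<in>J. \<forall>y\<in>J. x + y \<in> J) \<and>
     (\<forall>c x. x \<in> J \<longrightarrow> c *\<^sub>R x \<in> J) \<and>
     (\<forall>x\<in>J. \<forall>y. vabs y \<le> vabs x \<longrightarrow> y \<in> J)"

definition uniformly_closed :: "'a::{ordered_real_vector, lattice} set \<Rightarrow> bool" where
  "uniformly_closed J \<longleftrightarrow>
     (\<forall>(xs::nat \<Rightarrow> 'a) x u (eps::nat \<Rightarrow> real).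
        (\<forall>k. xs k \<in> J) \<and> 0 \<le> u \<and> eps \<longlonglongrightarrow> 0 \<and>
        (\<forall>k. vabs (xs k - x) \<le> eps k *\<^sub>R u) \<longrightarrow> x \<in> J)"

definition is_sup_wrt :: "('a \<Rightarrow> 'a \<Rightarrow> bool) \<Rightarrow> 'a set \<Rightarrow> 'a \<Rightarrow> bool" where
  "is_sup_wrt le A s \<longleftrightarrow> (\<forall>a\<in>A. le a s) \<and> (\<forall>u. (\<forall>a\<in>A. le a u) \<longrightarrow> le s u)"

definition countable_sup_property_wrt :: "('a \<Rightarrow> 'a \<Rightarrow> bool) \<Rightarrow> bool" where
  "countable_sup_property_wrt le \<longleftrightarrow>
     (\<forall>A s. A \<noteq> {} \<and> is_sup_wrt le A s \<longrightarrow>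
        (\<exists>B. B \<subseteq> A \<and> countable B \<and> is_sup_wrt le B s))"

definition countable_sup_property :: "'a::{ordered_real_vector, lattice} itself \<Rightarrow> bool" where
  "countable_sup_property _ \<longleftrightarrow> countable_sup_property_wrt ((\<le>) :: 'a \<Rightarrow> 'a \<Rightarrow> bool)"

text \<open>Order of the quotient vector lattice E/J, expressed on representatives:
  [x] \<le> [y] iff x \<le> y + j for some j in J.\<close>
definition quot_le :: "'a::{ordered_real_vector, lattice} set \<Rightarrow> 'a \<Rightarrow> 'a \<Rightarrow> bool" where
  "quot_le J x y \<longleftrightarrow> (\<exists>j\<in>J. x \<le> y + j)"

text \<open>E/J has the countable sup property (subsets of E/J represented by sets of
  representatives; suprema are taken in the quotient order).\<close>
definition quotient_countable_sup_property :: "'a::{ordered_real_vector, lattice} set \<Rightarrow> bool" where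
  "quotient_countable_sup_property J \<longleftrightarrow> countable_sup_property_wrt (quot_le J)"

end

theory Submission
  imports Defs
begin


lemma vl_add_sup: "(a::'a::{ordered_real_vector, lattice}) + sup b c = sup (a+b) (a+c)"
proof (rule antisym)
  let ?X = "sup (a+b) (a+c)"
  have "sup b c \<le> -a + ?X"
  proof (rule sup_least)
    have "a + b \<le> ?X" by simp
    then have "-a + (a + b) \<le> -a + ?X" by (rule add_left_mono)
    then show "b \<le> -a + ?X" by simp
    have "a + c \<le> ?X" by simp
    then have "-a + (a + c) \<le> -a + ?X" by (rule add_left_mono)
    then show "c \<le> -a + ?X" by simp
  qed
  then have "a + sup b c \<le> a + (-a + ?X)" by (rule add_left_mono)
  then show "a + sup b c \<le> ?X" by simp
  show "?X \<le> a + sup b c" by (simp add: add_left_mono)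
qed

lemma vl_add_inf: "(a::'a::{ordered_real_vector, lattice}) + inf b c = inf (a+b) (a+c)"
proof (rule antisym)
  let ?X = "inf (a+b) (a+c)"
  have "-a + ?X \<le> inf b c"
  proof (rule inf_greatest)
    have "?X \<le> a + b" by simp
    then have "-a + ?X \<le> -a + (a + b)" by (rule add_left_mono)
    then show "-a + ?X \<le> b" by simp
    have "?X \<le> a + c" by simp
    then have "-a + ?X \<le> -a + (a + c)" by (rule add_left_mono)
    then show "-a + ?X \<le> c" by simp
  qed
  then have "a + (-a + ?X) \<le> a + inf b c" by (rule add_left_mono)
  then show "?X \<le> a + inf b c" by simp
  show "a + inf b c \<le> ?X" by (simp add: add_left_mono)
qed

lemma vl_neg_sup: "- sup (a::'a::{ordered_real_vector, lattice}) b = inf (-a) (-b)"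
proof (rule antisym)
  show "- sup a b \<le> inf (-a) (-b)" by simp
  have "sup a b \<le> - inf (-a) (-b)"
    by (rule sup_least) (metis inf_le1 le_minus_iff, metis inf_le2 le_minus_iff)
  then show "inf (-a) (-b) \<le> - sup a b" by (simp add: le_minus_iff)
qed

lemma vl_neg_inf: "- inf (a::'a::{ordered_real_vector, lattice}) b = sup (-a) (-b)"
  using vl_neg_sup[of "-a" "-b"] by (metis minus_minus)

lemma vl_add_eq_sup_inf: "(a::'a::{ordered_real_vector, lattice}) + b = sup a b + inf a b"
proof -
  have "a + b - sup a b = a + b + inf (-a) (-b)" by (simp add: vl_neg_sup)
  also have "\<dots> = inf (a + b + -a) (a + b + -b)" by (rule vl_add_inf)
  also have "\<dots> = inf a b" by (simp add: inf_commute)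
  finally show ?thesis by (simp add: algebra_simps)
qed

lemma vl_scale_sup: "0 \<le> c \<Longrightarrow> c *\<^sub>R sup (a::'a::{ordered_real_vector, lattice}) b = sup (c *\<^sub>R a) (c *\<^sub>R b)"
proof (cases "c = 0")
  case False
  assume c: "0 \<le> c"
  then have cp: "0 < c" using False by simp
  show ?thesis
  proof (rule antisym)
    have "sup a b \<le> inverse c *\<^sub>R sup (c *\<^sub>R a) (c *\<^sub>R b)"
    proof (rule sup_least)
      have "inverse c *\<^sub>R (c *\<^sub>R a) \<le> inverse c *\<^sub>R sup (c *\<^sub>R a) (c *\<^sub>R b)"
        by (rule scaleR_left_mono) (use cp in simp_all)
      then show "a \<le> inverse c *\<^sub>R sup (c *\<^sub>R a) (c *\<^sub>R b)" using cp by simp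
      have "inverse c *\<^sub>R (c *\<^sub>R b) \<le> inverse c *\<^sub>R sup (c *\<^sub>R a) (c *\<^sub>R b)"
        by (rule scaleR_left_mono) (use cp in simp_all)
      then show "b \<le> inverse c *\<^sub>R sup (c *\<^sub>R a) (c *\<^sub>R b)" using cp by simp
    qed
    then have "c *\<^sub>R sup a b \<le> c *\<^sub>R (inverse c *\<^sub>R sup (c *\<^sub>R a) (c *\<^sub>R b))"
      by (rule scaleR_left_mono) (use cp in simp)
    then show "c *\<^sub>R sup a b \<le> sup (c *\<^sub>R a) (c *\<^sub>R b)" using cp by simp
    show "sup (c *\<^sub>R a) (c *\<^sub>R b) \<le> c *\<^sub>R sup a b"
      using c by (simp add: scaleR_left_mono)
  qed
qed simp

lemma vl_scale_inf: "0 \<le> c \<Longrightarrow> c *\<^sub>R inf (a::'a::{ordered_real_vector, lattice}) b = inf (c *\<^sub>R a) (c *\<^sub>R b)"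
proof -
  assume c: "0 \<le> c"
  have "inf a b = - sup (-a) (-b)" using vl_neg_sup[of "-a" "-b"] by simp
  then have "c *\<^sub>R inf a b = - (c *\<^sub>R sup (-a) (-b))" by simp
  also have "\<dots> = - sup (c *\<^sub>R -a) (c *\<^sub>R -b)" using vl_scale_sup[OF c, of "-a" "-b"] by simp
  also have "\<dots> = inf (c *\<^sub>R a) (c *\<^sub>R b)" by (simp add: vl_neg_sup)
  finally show ?thesis .
qed

lemma vl_inf_add_le:
  fixes a b c :: "'a::{ordered_real_vector, lattice}"
  assumes "0 \<le> a" "0 \<le> b" "0 \<le> c"
  shows "inf a (b + c) \<le> inf a b + inf a c"
proof -
  let ?p = "inf a (b + c)"
  have "?p - inf a b = ?p + - inf a b" by (rule diff_conv_add_uminus)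
  also have "\<dots> = ?p + sup (-a) (-b)" by (simp only: vl_neg_inf)
  also have "\<dots> = sup (?p + -a) (?p + -b)" by (rule vl_add_sup)
  also have "\<dots> = sup (?p - a) (?p - b)" by (simp only: diff_conv_add_uminus)
  finally have eq: "?p - inf a b = sup (?p - a) (?p - b)" .
  have pa: "?p \<le> a" by simp
  then have "?p - a \<le> 0" by simp
  then have "?p - a \<le> c" using assms(3) by (rule order.trans)
  moreover have "?p - b \<le> c"
  proof -
    have "?p \<le> c + b" using inf_le2[of a "b+c"] by (simp only: add.commute)
    then show ?thesis by (simp only: diff_le_eq)
  qed
  ultimately have 1: "?p - inf a b \<le> c" unfolding eq by (rule sup_least)
  have "0 \<le> inf a b" using assms by simp
  then have "?p - inf a b \<le> ?p - 0" by (rule diff_left_mono)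
  then have 2: "?p - inf a b \<le> a" using pa by simp
  from 1 2 have "?p - inf a b \<le> inf a c" by simp
  then have "?p \<le> inf a c + inf a b" by (simp only: diff_le_eq)
  then show ?thesis by (simp only: add.commute)
qed

lemma vl_disj_nat:
  fixes a b :: "'a::{ordered_real_vector, lattice}"
  assumes "0 \<le> a" "0 \<le> b" "inf a b = 0"
  shows "inf (real n *\<^sub>R a) b = 0"
proof (induction n)
  case 0
  then show ?case using assms by (simp add: inf_absorb1)
next
  case (Suc n)
  have na: "0 \<le> real n *\<^sub>R a" using assms by (simp add: scaleR_nonneg_nonneg)
  have "inf b (a + real n *\<^sub>R a) \<le> inf b a + inf b (real n *\<^sub>R a)"
    by (rule vl_inf_add_le) (use assms na in auto)
  also have "\<dots> = 0" using Suc assms by (simp add: inf_commute)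
  finally have "inf (real (Suc n) *\<^sub>R a) b \<le> 0" by (simp add: inf_commute scaleR_left_distrib add.commute)
  moreover have "0 \<le> inf (real (Suc n) *\<^sub>R a) b" using assms by (simp add: scaleR_nonneg_nonneg)
  ultimately show ?case by (rule antisym)
qed

lemma vl_disj_scale:
  fixes a b :: "'a::{ordered_real_vector, lattice}"
  assumes "0 \<le> a" "0 \<le> b" "inf a b = 0" "0 \<le> c"
  shows "inf (c *\<^sub>R a) b = 0"
proof -
  obtain n :: nat where n: "c \<le> real n" using real_arch_simple by blast
  have "c *\<^sub>R a \<le> real n *\<^sub>R a" using n assms(1) by (rule scaleR_right_mono)
  then have "inf (c *\<^sub>R a) b \<le> inf (real n *\<^sub>R a) b" by (simp add: le_infI1)
  also have "\<dots> = 0" using vl_disj_nat assms by blast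
  finally have "inf (c *\<^sub>R a) b \<le> 0" .
  moreover have "0 \<le> inf (c *\<^sub>R a) b" using assms by (simp add: scaleR_nonneg_nonneg)
  ultimately show ?thesis by (rule antisym)
qed

lemma vl_inf_scale_le:
  fixes a b :: "'a::{ordered_real_vector, lattice}"
  assumes "0 \<le> b" "1 \<le> c"
  shows "inf (c *\<^sub>R a) b \<le> c *\<^sub>R inf a b"
proof -
  have "b \<le> c *\<^sub>R b" using assms scaleR_right_mono[of 1 c b] by simp
  then have "inf (c *\<^sub>R a) b \<le> inf (c *\<^sub>R a) (c *\<^sub>R b)" by (simp add: le_infI2)
  also have "\<dots> = c *\<^sub>R inf a b" using assms by (simp add: vl_scale_inf)
  finally show ?thesis .
qed

lemma vl_diff_inf: "(u::'a::{ordered_real_vector, lattice}) - inf u y = sup (u - y) 0"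
proof -
  have "u - inf u y = u + sup (-u) (-y)" by (simp add: vl_neg_inf)
  also have "\<dots> = sup 0 (u - y)" by (simp add: vl_add_sup)
  finally show ?thesis by (simp add: sup_commute)
qed

lemma vl_pos_neg_disj: "inf (sup (x::'a::{ordered_real_vector, lattice}) 0) (sup (-x) 0) = 0"
proof -
  let ?P = "sup x 0" and ?N = "sup (-x) 0"
  have "?P - ?N = ?P + inf x 0" by (simp add: vl_neg_sup)
  also have "\<dots> = x" using vl_add_eq_sup_inf[of x 0] by simp
  finally have PN: "?P - ?N = x" .
  have "?P - inf ?P ?N = sup (?P - ?N) 0" by (rule vl_diff_inf)
  also have "\<dots> = ?P" using PN by simp
  finally show ?thesis by simp
qed

lemma vl_pos_inf_bound:
  fixes u x :: "'a::{ordered_real_vector, lattice}"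
  assumes "0 \<le> u" "0 \<le> x" "0 \<le> c"
  shows "c *\<^sub>R inf (sup (u - c *\<^sub>R x) 0) x \<le> u"
proof -
  let ?y = "c *\<^sub>R x" and ?p = "sup (u - c *\<^sub>R x) 0"
  have y0: "0 \<le> ?y" using assms by (simp add: scaleR_nonneg_nonneg)
  have e1: "c *\<^sub>R inf ?p x = inf (c *\<^sub>R ?p) ?y" using assms by (simp add: vl_scale_inf)
  have e2: "?y = inf ?y u + sup (?y - u) 0" using vl_diff_inf[of ?y u] by (simp add: algebra_simps)
  have le: "inf (c *\<^sub>R ?p) (inf ?y u + sup (?y - u) 0) \<le> inf (c *\<^sub>R ?p) (inf ?y u) + inf (c *\<^sub>R ?p) (sup (?y - u) 0)"
    by (rule vl_inf_add_le) (use assms y0 in \<open>auto simp: scaleR_nonneg_nonneg\<close>)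
  have z: "inf (c *\<^sub>R ?p) (sup (?y - u) 0) = 0"
    using vl_disj_scale[of ?p "sup (?y - u) 0" c] vl_pos_neg_disj[of "u - ?y"] assms by simp
  have l2: "inf (c *\<^sub>R ?p) (inf ?y u) \<le> u" by (simp add: le_infI2)
  have "c *\<^sub>R inf ?p x = inf (c *\<^sub>R ?p) (inf ?y u + sup (?y - u) 0)" using e1 e2 by metis
  also have "\<dots> \<le> u" using le z l2 by simp
  finally show ?thesis .
qed

lemma vabs_nonneg: "0 \<le> vabs (x::'a::{ordered_real_vector, lattice})"
proof -
  let ?s = "vabs x"
  have "x \<le> ?s" "-x \<le> ?s" by (simp_all add: vabs_def)
  then have "x + -x \<le> ?s + ?s" by (rule add_mono)
  then have "0 \<le> (2::real) *\<^sub>R ?s" by (simp add: scaleR_2)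
  then show ?thesis by (simp add: zero_le_scaleR_iff)
qed

lemma vabs_pos: "0 \<le> (x::'a::{ordered_real_vector, lattice}) \<Longrightarrow> vabs x = x"
  unfolding vabs_def by (rule sup_absorb1) (meson neg_le_0_iff_le order.trans)

lemma ideal_solid:
  assumes "vl_ideal J" "x \<in> J" "0 \<le> y" "y \<le> x"
  shows "y \<in> J"
proof -
  have "vabs y \<le> vabs x" using assms vabs_pos[of y] vabs_pos[of x] by simp
  then show ?thesis using assms unfolding vl_ideal_def by blast
qed

lemma ideal_pos:
  assumes "vl_ideal J" "x \<in> J"
  shows "sup x 0 \<in> J"
proof -
  have "vabs (sup x 0) = sup x 0" by (simp add: vabs_pos)
  also have "\<dots> \<le> vabs x" using vabs_nonneg[of x] by (simp add: vabs_def)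
  finally show ?thesis using assms unfolding vl_ideal_def by blast
qed

lemma ideal_add: "vl_ideal J \<Longrightarrow> x \<in> J \<Longrightarrow> y \<in> J \<Longrightarrow> x + y \<in> J"
  unfolding vl_ideal_def by blast

lemma ideal_scale: "vl_ideal J \<Longrightarrow> x \<in> J \<Longrightarrow> c *\<^sub>R x \<in> J"
  unfolding vl_ideal_def by blast

lemma ideal_zero: "vl_ideal J \<Longrightarrow> 0 \<in> J"
  unfolding vl_ideal_def by blast

lemma quot_le_iff:
  assumes "vl_ideal J"
  shows "quot_le J a w \<longleftrightarrow> sup (a - w) 0 \<in> J"
proof
  assume "quot_le J a w"
  then obtain j where j: "j \<in> J" "a \<le> w + j" unfolding quot_le_def by blast
  then have "a - w \<le> j" by (simp add: diff_le_eq add.commute)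
  then have "a - w \<le> sup j 0" using sup_ge1 order_trans by blast
  then have "sup (a - w) 0 \<le> sup j 0" by simp
  moreover have "sup j 0 \<in> J" using ideal_pos assms j by blast
  ultimately show "sup (a - w) 0 \<in> J" using ideal_solid assms by (metis sup.cobounded2)
next
  assume "sup (a - w) 0 \<in> J"
  moreover have "a \<le> w + sup (a - w) 0"
  proof -
    have "a - w \<le> sup (a - w) 0" by simp
    then show ?thesis by (metis add.commute diff_le_eq)
  qed
  ultimately show "quot_le J a w" unfolding quot_le_def by blast
qed

lemma ideal_uc:
  fixes y u :: "'a::{ordered_real_vector, lattice}"
  assumes J: "vl_ideal J" "uniformly_closed J"
    and y: "0 \<le> y" and u: "0 \<le> u"
    and h: "\<And>n::nat. \<exists>p\<in>J. y \<le> (1 / real (Suc n)) *\<^sub>R u + p"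
  shows "y \<in> J"
proof -
  define eps where "eps k = 1 / real (Suc k)" for k
  define xs where "xs k = sup (y - eps k *\<^sub>R u) 0" for k
  have xsJ: "xs k \<in> J" for k
  proof -
    obtain p where p: "p \<in> J" "y \<le> eps k *\<^sub>R u + p" using h[of k] unfolding eps_def by blast
    then have "y - eps k *\<^sub>R u \<le> p" by (simp add: diff_le_eq add.commute)
    then have "y - eps k *\<^sub>R u \<le> sup p 0" using sup_ge1 order_trans by blast
    then have "xs k \<le> sup p 0" unfolding xs_def by simp
    then show ?thesis using ideal_solid[OF J(1) ideal_pos[OF J(1) p(1)]] xs_def by simp
  qed
  have "eps \<longlonglongrightarrow> 0" unfolding eps_def using LIMSEQ_Suc[OF lim_inverse_n'] by simp
  moreover have "vabs (xs k - y) \<le> eps k *\<^sub>R u" for k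
  proof -
    have "y - xs k = inf y (eps k *\<^sub>R u)"
      using vl_diff_inf[of y "eps k *\<^sub>R u"] unfolding xs_def by (simp add: algebra_simps)
    then have e: "xs k - y = - inf y (eps k *\<^sub>R u)" by (simp add: algebra_simps)
    have "0 \<le> eps k *\<^sub>R u" using u by (simp add: eps_def scaleR_nonneg_nonneg)
    then have i0: "0 \<le> inf y (eps k *\<^sub>R u)" using y by simp
    have "vabs (xs k - y) = inf y (eps k *\<^sub>R u)"
      unfolding e vabs_def using i0 by (simp add: sup_absorb2 order.trans[of _ 0])
    then show ?thesis by simp
  qed
  ultimately show ?thesis using J(2) xsJ u unfolding uniformly_closed_def by blast
qed


lemma sup_w_decomp: "sup (w::'a::{ordered_real_vector, lattice}) 0 = w + sup (-w) 0"
  using vl_add_sup[of w "-w" 0] by (simp add: sup_commute)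

lemma part_c:
  fixes M :: "'a::{ordered_real_vector, lattice} set" and u :: 'a
  assumes J: "vl_ideal J" "uniformly_closed J" "quotient_countable_sup_property J"
    and u: "0 \<le> u"
    and M: "\<And>x. x \<in> M \<Longrightarrow> 0 \<le> x \<and> x \<le> u"
    and disj: "\<And>x y. x \<in> M \<Longrightarrow> y \<in> M \<Longrightarrow> x \<noteq> y \<Longrightarrow> inf x y = 0"
  shows "countable {x\<in>M. x \<notin> J}"
proof -
  define S1 where "S1 = {inf u (real n *\<^sub>R x) | x n. x \<in> M}"
  define V where "V = {v. 0 \<le> v \<and> v \<le> u \<and> (\<forall>x\<in>M. inf v x \<in> J)}"
  define S where "S = S1 \<union> V"
  have J0: "0 \<in> J" using ideal_zero[OF J(1)] .
  have V0: "0 \<in> V" unfolding V_def using u M J0 by (auto simp: inf_absorb1)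
  have Sb: "0 \<le> a \<and> a \<le> u" if "a \<in> S" for a
    using that M u unfolding S_def S1_def V_def by (auto simp: scaleR_nonneg_nonneg)
  have supS: "is_sup_wrt (quot_le J) S u"
    unfolding is_sup_wrt_def
  proof (intro conjI allI impI ballI)
    fix a assume "a \<in> S"
    then have "a \<le> u + 0" using Sb by simp
    then show "quot_le J a u" unfolding quot_le_def using J0 by blast
  next
    fix w assume H: "\<forall>a\<in>S. quot_le J a w"
    have Hw: "sup (a - w) 0 \<in> J" if "a \<in> S" for a using H that quot_le_iff[OF J(1)] by blast
    define c where "c = inf u (sup w 0)"
    have Hc: "sup (a - c) 0 \<in> J" if a: "a \<in> S" for a
    proof -
      have "a - c = a + sup (-u) (- sup w 0)"
        unfolding c_def by (metis diff_conv_add_uminus vl_neg_inf)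
      also have "\<dots> = sup (a - u) (a - sup w 0)" by (simp add: vl_add_sup)
      finally have "a - c = sup (a - u) (a - sup w 0)" .
      moreover have "a - u \<le> sup (a - w) 0" using Sb[OF a] by (simp add: le_supI2)
      moreover have "a - sup w 0 \<le> sup (a - w) 0"
        by (rule le_supI1) (simp add: diff_mono)
      ultimately have "a - c \<le> sup (a - w) 0" by simp
      then have "sup (a - c) 0 \<le> sup (a - w) 0" by simp
      then show ?thesis using ideal_solid[OF J(1) Hw[OF a]] by simp
    qed
    define z where "z = u - c"
    have c0: "0 \<le> c" "c \<le> u" unfolding c_def using u by simp_all
    have z0: "0 \<le> z" "z \<le> u" unfolding z_def using c0 by simp_all
    have zx: "inf z x \<in> J" if x: "x \<in> M" for x
    proof (rule ideal_uc[OF J(1,2)])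
      show "0 \<le> inf z x" using z0 M[OF x] by simp
      show "0 \<le> u" by (rule u)
      fix n :: nat
      let ?N = "real (Suc n)"
      define an where "an = inf u (?N *\<^sub>R x)"
      have anS: "an \<in> S" unfolding an_def S_def S1_def using x by blast
      define p where "p = sup (an - c) 0"
      have pJ: "p \<in> J" unfolding p_def using Hc[OF anS] .
      have p0: "0 \<le> p" unfolding p_def by simp
      have "u - an = sup (u - ?N *\<^sub>R x) 0" unfolding an_def by (rule vl_diff_inf)
      then have "z = sup (u - ?N *\<^sub>R x) 0 + (an - c)" unfolding z_def by (simp add: algebra_simps)
      also have "\<dots> \<le> sup (u - ?N *\<^sub>R x) 0 + p" unfolding p_def by (simp add: add_left_mono)
      finally have zle: "z \<le> sup (u - ?N *\<^sub>R x) 0 + p" .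
      have x0: "0 \<le> x" using M[OF x] by simp
      have "inf z x \<le> inf x (sup (u - ?N *\<^sub>R x) 0 + p)"
        using zle by (meson inf_le1 inf_le2 le_inf_iff order_trans)
      also have "\<dots> \<le> inf x (sup (u - ?N *\<^sub>R x) 0) + inf x p"
        by (rule vl_inf_add_le) (use x0 p0 in auto)
      also have "\<dots> \<le> inf (sup (u - ?N *\<^sub>R x) 0) x + p" by (simp add: inf_commute add_left_mono)
      finally have l1: "inf z x \<le> inf (sup (u - ?N *\<^sub>R x) 0) x + p" .
      have l2: "inf (sup (u - ?N *\<^sub>R x) 0) x \<le> (1 / ?N) *\<^sub>R u"
      proof -
        have "?N *\<^sub>R inf (sup (u - ?N *\<^sub>R x) 0) x \<le> u"
          by (rule vl_pos_inf_bound) (use u x0 in auto)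
        then have "(1 / ?N) *\<^sub>R (?N *\<^sub>R inf (sup (u - ?N *\<^sub>R x) 0) x) \<le> (1 / ?N) *\<^sub>R u"
          by (rule scaleR_left_mono) simp
        then show ?thesis by simp
      qed
      have "inf z x \<le> (1 / ?N) *\<^sub>R u + p"
        using l1 add_right_mono[OF l2, of p] by (rule order_trans)
      then show "\<exists>p\<in>J. inf z x \<le> (1 / ?N) *\<^sub>R u + p" using pJ by blast
    qed
    have vk: "inf (real k *\<^sub>R z) u \<in> S" for k :: nat
    proof -
      have "inf (inf (real k *\<^sub>R z) u) x \<in> J" if x: "x \<in> M" for x
      proof (cases "k = 0")
        case True
        then show ?thesis using u M[OF x] J0 by (simp add: inf_absorb1)
      next
        case False
        have x0: "0 \<le> x" using M[OF x] by simp
        have "inf (inf (real k *\<^sub>R z) u) x \<le> inf (real k *\<^sub>R z) x" by (simp add: le_infI1)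
        also have "\<dots> \<le> real k *\<^sub>R inf z x" by (rule vl_inf_scale_le) (use x0 False in auto)
        finally have le: "inf (inf (real k *\<^sub>R z) u) x \<le> real k *\<^sub>R inf z x" .
        have "0 \<le> inf (inf (real k *\<^sub>R z) u) x" using x0 z0 u by (simp add: scaleR_nonneg_nonneg)
        then show ?thesis using ideal_solid[OF J(1) ideal_scale[OF J(1) zx[OF x]] _ le] by simp
      qed
      moreover have "0 \<le> inf (real k *\<^sub>R z) u" using z0 u by (simp add: scaleR_nonneg_nonneg)
      ultimately show ?thesis unfolding S_def V_def by auto
    qed
    have kz: "\<exists>q\<in>J. real k *\<^sub>R z \<le> u + q" for k :: nat
    proof (induction k)
      case 0
      show ?case by (rule bexI[where x=0]) (simp_all add: u J0)
    next
      case (Suc k)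
      then obtain q where q: "q \<in> J" "real k *\<^sub>R z \<le> u + q" by blast
      define q' where "q' = sup q 0"
      have q'J: "q' \<in> J" unfolding q'_def using ideal_pos[OF J(1) q(1)] .
      have "real k *\<^sub>R z - u \<le> q'" using q(2) unfolding q'_def
        by (metis add.commute diff_le_eq le_supI1 order_refl)
      then have "sup (real k *\<^sub>R z - u) 0 \<le> q'" unfolding q'_def by simp
      then have "real k *\<^sub>R z - inf (real k *\<^sub>R z) u \<le> q'" by (simp add: vl_diff_inf)
      then have h1: "real k *\<^sub>R z \<le> inf (real k *\<^sub>R z) u + q'" by (simp add: diff_le_eq add.commute)
      define pk where "pk = sup (inf (real k *\<^sub>R z) u - c) 0"
      have pkJ: "pk \<in> J" unfolding pk_def using Hc[OF vk] .
      have "inf (real k *\<^sub>R z) u - c \<le> pk" unfolding pk_def by simp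
      then have h2: "inf (real k *\<^sub>R z) u \<le> c + pk" by (simp add: diff_le_eq add.commute)
      from h1 h2 have "real k *\<^sub>R z \<le> c + pk + q'" by (meson add_right_mono order_trans)
      then have "real k *\<^sub>R z + z \<le> c + pk + q' + z" by (rule add_right_mono)
      also have "c + pk + q' + z = u + (pk + q')" unfolding z_def by (simp add: algebra_simps)
      finally have "real (Suc k) *\<^sub>R z \<le> u + (pk + q')" by (simp add: algebra_simps)
      moreover have "pk + q' \<in> J" using ideal_add[OF J(1) pkJ q'J] .
      ultimately show ?case by blast
    qed
    have zJ: "z \<in> J"
    proof (rule ideal_uc[OF J(1,2) z0(1) u])
      fix n :: nat
      let ?N = "real (Suc n)"
      obtain q where q: "q \<in> J" "?N *\<^sub>R z \<le> u + q" using kz by blast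
      then have "(1 / ?N) *\<^sub>R (?N *\<^sub>R z) \<le> (1 / ?N) *\<^sub>R (u + q)"
        by (intro scaleR_left_mono) simp_all
      then have "z \<le> (1 / ?N) *\<^sub>R u + (1 / ?N) *\<^sub>R q" by (simp add: scaleR_add_right)
      then show "\<exists>p\<in>J. z \<le> (1 / ?N) *\<^sub>R u + p" using ideal_scale[OF J(1) q(1)] by blast
    qed
    have 0: "sup (- w) 0 \<in> J" using Hw[of 0] V0 unfolding S_def by simp
    have "u = c + z" unfolding z_def by simp
    also have "\<dots> \<le> sup w 0 + z" unfolding c_def by (simp add: add_right_mono)
    also have "\<dots> = w + (sup (- w) 0 + z)" by (subst sup_w_decomp) (simp add: algebra_simps)
    finally show "quot_le J u w" unfolding quot_le_def using ideal_add[OF J(1) 0 zJ] by blast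
  qed
  have Sne: "S \<noteq> {}" using V0 unfolding S_def by blast
  obtain B where B: "B \<subseteq> S" "countable B" "is_sup_wrt (quot_le J) B u"
    using J(3) Sne supS unfolding quotient_countable_sup_property_def countable_sup_property_wrt_def
    by blast
  define P where "P b x \<longleftrightarrow> x \<in> M \<and> (\<exists>n. b = inf u (real n *\<^sub>R x)) \<and> inf b x \<notin> J" for b x
  have Puniq: "x = y" if "P b x" "P b y" for b x y
  proof (rule ccontr)
    assume ne: "x \<noteq> y"
    from that obtain n where n: "b = inf u (real n *\<^sub>R x)" "x \<in> M" "y \<in> M" "inf b y \<notin> J"
      unfolding P_def by blast
    have x0: "0 \<le> x" "0 \<le> y" using M n(2,3) by auto
    have "inf b y \<le> inf (real n *\<^sub>R x) y" unfolding n(1) by (simp add: le_infI1)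
    also have "\<dots> = 0" using vl_disj_scale[OF x0 disj[OF n(2,3) ne]] by simp
    finally have "inf b y \<le> 0" .
    moreover have "0 \<le> inf b y" unfolding n(1) using u x0 by (simp add: scaleR_nonneg_nonneg)
    ultimately have "inf b y = 0" by simp
    then show False using n(4) J0 by simp
  qed
  define g where "g b = (SOME x. P b x)" for b
  have "{x\<in>M. x \<notin> J} \<subseteq> g ` B"
  proof
    fix x assume "x \<in> {x\<in>M. x \<notin> J}"
    then have x: "x \<in> M" "x \<notin> J" by auto
    have x0: "0 \<le> x" "x \<le> u" using M[OF x(1)] by auto
    have "\<exists>b\<in>B. inf b x \<notin> J"
    proof (rule ccontr)
      assume "\<not> (\<exists>b\<in>B. inf b x \<notin> J)"
      then have all: "\<forall>b\<in>B. inf b x \<in> J" by blast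
      define w where "w = u - x"
      have "quot_le J b w" if b: "b \<in> B" for b
      proof -
        have b0: "0 \<le> b" "b \<le> u" using Sb B(1) b by auto
        have sb: "sup b x \<le> u" using b0 x0 by simp
        have "b + x = sup b x + inf b x" by (rule vl_add_eq_sup_inf)
        also have "\<dots> \<le> u + inf b x" using sb by (rule add_right_mono)
        finally have h: "b + x \<le> u + inf b x" .
        have "b \<le> u + inf b x - x" using h by (simp add: le_diff_eq)
        also have "\<dots> = w + inf b x" unfolding w_def by (simp add: algebra_simps)
        finally have "b \<le> w + inf b x" .
        moreover have "inf b x \<in> J" using all b by blast
        ultimately show ?thesis unfolding quot_le_def by blast
      qed
      moreover have "\<forall>u'. (\<forall>a\<in>B. quot_le J a u') \<longrightarrow> quot_le J u u'"
        using B(3) unfolding is_sup_wrt_def by (rule conjunct2)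
      ultimately have "quot_le J u w" by blast
      then obtain j where j: "j \<in> J" "u \<le> w + j" unfolding quot_le_def by blast
      then have "u \<le> u + (j - x)" unfolding w_def by (simp add: diff_add_eq add.commute)
      then have "0 \<le> j - x" by simp
      then have "x \<le> j" by simp
      then have "x \<le> sup j 0" by (simp add: le_supI1)
      then have "x \<in> J" using ideal_solid[OF J(1) ideal_pos[OF J(1) j(1)] x0(1)] by simp
      then show False using x(2) by simp
    qed
    then obtain b where b: "b \<in> B" "inf b x \<notin> J" by blast
    have "b \<in> S" using b B(1) by blast
    moreover have "b \<notin> V" using b x unfolding V_def by blast
    ultimately have "b \<in> S1" unfolding S_def by blast
    then obtain y n where y: "y \<in> M" "b = inf u (real n *\<^sub>R y)" unfolding S1_def by blast
    have yx: "y = x"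
    proof (rule ccontr)
      assume ne: "y \<noteq> x"
      have y0: "0 \<le> y" using M y(1) by auto
      have "inf b x \<le> inf (real n *\<^sub>R y) x" unfolding y(2) by (simp add: le_infI1)
      also have "\<dots> = 0" using vl_disj_scale[OF y0 x0(1) disj[OF y(1) x(1) ne]] by simp
      finally have "inf b x \<le> 0" .
      moreover have "0 \<le> inf b x" unfolding y(2) using u x0 y0 by (simp add: scaleR_nonneg_nonneg)
      ultimately have "inf b x = 0" by simp
      then show False using b(2) J0 by simp
    qed
    have Pbx: "P b x" unfolding P_def using y b x yx by blast
    then have "P b (g b)" unfolding g_def by (rule someI)
    then have "g b = x" using Puniq Pbx by blast
    then show "x \<in> g ` B" using b(1) by blast
  qed
  then show ?thesis using countable_image[OF B(2)] by (rule countable_subset)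
qed


lemma part_b:
  fixes J :: "nat \<Rightarrow> 'a::{ordered_real_vector, lattice} set" and M :: "'a set"
  assumes "\<And>n. vl_ideal (J n)"
    and "\<And>n. uniformly_closed (J n)"
    and "\<And>n. quotient_countable_sup_property (J n)"
    and I: "(\<Inter>n. J n) = {0}"
    and u: "0 \<le> u"
    and M: "\<And>x. x \<in> M \<Longrightarrow> 0 < x \<and> x \<le> u"
    and disj: "\<And>x y. x \<in> M \<Longrightarrow> y \<in> M \<Longrightarrow> x \<noteq> y \<Longrightarrow> inf x y = 0"
  shows "countable M"
proof -
  have c: "countable {x\<in>M. x \<notin> J n}" for n
    by (rule part_c[OF assms(1-3) u]) (use M disj in \<open>auto simp: less_imp_le\<close>)
  have "M \<subseteq> (\<Union>n. {x\<in>M. x \<notin> J n})"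
  proof
    fix x assume x: "x \<in> M"
    then have "x \<noteq> 0" using M by (metis less_irrefl)
    then have "x \<notin> (\<Inter>n. J n)" using I by simp
    then show "x \<in> (\<Union>n. {x\<in>M. x \<notin> J n})" using x by blast
  qed
  moreover have "countable (\<Union>n. {x\<in>M. x \<notin> J n})" using c by blast
  ultimately show ?thesis using countable_subset by blast
qed

theorem proposition4p15:
  fixes J :: "nat \<Rightarrow> 'a::{ordered_real_vector, lattice} set"
  assumes "archimedean_vl TYPE('a)"
    and "\<And>n. vl_ideal (J n)"
    and "\<And>n. uniformly_closed (J n)"
    and "\<And>n. quotient_countable_sup_property (J n)"
    and "(\<Inter>n. J n) = {0}"
  shows "countable_sup_property TYPE('a)"
  unfolding countable_sup_property_def countable_sup_property_wrt_def
proof (intro allI impI)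
  fix A :: "'a set" and s
  assume "A \<noteq> {} \<and> is_sup_wrt (\<le>) A s"
  then have Ane: "A \<noteq> {}" and ub: "\<And>a. a \<in> A \<Longrightarrow> a \<le> s"
    and lub: "\<And>w. (\<forall>a\<in>A. a \<le> w) \<Longrightarrow> s \<le> w"
    unfolding is_sup_wrt_def by auto
  obtain a0 where a0: "a0 \<in> A" using Ane by blast
  define d0 where "d0 = s - a0"
  have d0: "0 \<le> d0" unfolding d0_def using ub[OF a0] by simp
  define pp where "pp m a = sup (d0 - real (Suc m) *\<^sub>R (s - a)) 0" for m a
  have pp_le: "pp m a \<le> d0" if "a \<in> A" for m a
  proof -
    have "0 \<le> real (Suc m) *\<^sub>R (s - a)" using ub[OF that] by (simp add: scaleR_nonneg_nonneg)
    then show ?thesis unfolding pp_def using d0 by simp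
  qed
  define X where "X m = {x. 0 < x \<and> (\<exists>a\<in>A. x \<le> pp m a)}" for m
  define F where "F m = {Y. Y \<subseteq> X m \<and> pairwise (\<lambda>x y. inf x y = 0) Y}" for m
  have "\<exists>Mx\<in>F m. \<forall>Y\<in>F m. Mx \<subseteq> Y \<longrightarrow> Y = Mx" for m
  proof (rule Zorn_Lemma, intro ballI)
    fix C assume C: "C \<in> chains (F m)"
    have "\<Union>C \<subseteq> X m" using chainsD2[OF C] unfolding F_def by blast
    moreover have "pairwise (\<lambda>x y. inf x y = 0) (\<Union>C)"
      by (rule pairwise_chain_Union) (use chainsD2[OF C] C in \<open>auto simp: F_def chains_def\<close>)
    ultimately show "\<Union>C \<in> F m" unfolding F_def by blast
  qed
  then obtain MM where MM: "\<And>m. MM m \<in> F m" "\<And>m Y. Y \<in> F m \<Longrightarrow> MM m \<subseteq> Y \<Longrightarrow> Y = MM m"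
    by metis
  have MMX: "MM m \<subseteq> X m" and MMd: "pairwise (\<lambda>x y. inf x y = 0) (MM m)" for m
    using MM(1)[of m] unfolding F_def by auto
  have MMpos: "0 \<le> x" if "x \<in> MM m" for x m
  proof -
    have "x \<in> X m" using that MMX by blast
    then have "0 < x" unfolding X_def by blast
    then show ?thesis by (rule less_imp_le)
  qed
  have cMM: "countable (MM m)" for m
  proof (rule part_b[OF assms(2-5) d0])
    fix x assume "x \<in> MM m"
    then have "x \<in> X m" using MMX by blast
    then show "0 < x \<and> x \<le> d0" unfolding X_def using pp_le order_trans by blast
  next
    fix x y assume "x \<in> MM m" "y \<in> MM m" "x \<noteq> y"
    then show "inf x y = 0" using MMd[of m] unfolding pairwise_def by blast
  qed
  define alpha where "alpha m x = (SOME a. a \<in> A \<and> x \<le> pp m a)" for m x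
  have alpha: "alpha m x \<in> A \<and> x \<le> pp m (alpha m x)" if "x \<in> MM m" for m x
  proof -
    have "\<exists>a. a \<in> A \<and> x \<le> pp m a" using that MMX unfolding X_def by blast
    then show ?thesis unfolding alpha_def by (rule someI_ex)
  qed
  define B where "B = insert a0 (\<Union>m. alpha m ` MM m)"
  have BA: "B \<subseteq> A" unfolding B_def using a0 alpha by blast
  have cB: "countable B" unfolding B_def using cMM by blast
  have "is_sup_wrt (\<le>) B s"
    unfolding is_sup_wrt_def
  proof (intro conjI allI impI ballI)
    fix b assume "b \<in> B" then show "b \<le> s" using BA ub by blast
  next
    fix w assume wB: "\<forall>b\<in>B. b \<le> w"
    define z where "z = sup (s - w) 0"
    have zlow: "z \<le> s - b" if "b \<in> B" for b
    proof -
      have "s - w \<le> s - b" using wB that by (simp add: diff_left_mono)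
      moreover have "0 \<le> s - b" using that BA ub by fastforce
      ultimately show ?thesis unfolding z_def by simp
    qed
    have z0: "0 \<le> z" unfolding z_def by simp
    have zd0: "z \<le> d0" unfolding d0_def using zlow[of a0] B_def by blast
    have key: "real (Suc m) *\<^sub>R z \<le> d0" for m
    proof -
      let ?r = "real (Suc m)"
      define ww where "ww = sup (?r *\<^sub>R z - d0) 0"
      have ww0: "0 \<le> ww" unfolding ww_def by simp
      have disjp: "inf ww (sup (d0 - ?r *\<^sub>R z) 0) = 0"
        using vl_pos_neg_disj[of "?r *\<^sub>R z - d0"] unfolding ww_def by simp
      have i: "inf ww x = 0" if x: "x \<in> MM m" for x
      proof -
        have "alpha m x \<in> B" unfolding B_def using x by blast
        then have "z \<le> s - alpha m x" by (rule zlow)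
        then have "?r *\<^sub>R z \<le> ?r *\<^sub>R (s - alpha m x)" by (simp add: scaleR_left_mono)
        then have "pp m (alpha m x) \<le> sup (d0 - ?r *\<^sub>R z) 0" unfolding pp_def
          by (simp add: le_supI1 diff_left_mono)
        then have xle: "x \<le> sup (d0 - ?r *\<^sub>R z) 0" using alpha[OF x] by (blast intro: order_trans)
        have "inf ww x \<le> inf ww (sup (d0 - ?r *\<^sub>R z) 0)" by (rule inf_mono[OF order_refl xle])
        then have "inf ww x \<le> 0" using disjp by (rule ord_le_eq_trans)
        moreover have "0 \<le> x" using MMpos[OF x] .
        ultimately show ?thesis using ww0 by (simp add: antisym)
      qed
      have ii: "inf ww (pp m a) = 0" if a: "a \<in> A" for a
      proof (rule ccontr)
        let ?y = "inf ww (pp m a)"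
        assume ne: "?y \<noteq> 0"
        have y0: "0 \<le> ?y" using ww0 unfolding pp_def by simp
        then have yp: "0 < ?y" using ne by (simp add: order_less_le)
        have "?y \<le> pp m a" by (rule inf_le2)
        then have yX: "?y \<in> X m" unfolding X_def using yp a by blast
        have yM: "?y \<notin> MM m"
        proof
          assume "?y \<in> MM m"
          then have "inf ww ?y = 0" by (rule i)
          moreover have "inf ww ?y = ?y" by (simp add: inf_absorb2)
          ultimately show False using ne by simp
        qed
        have "insert ?y (MM m) \<in> F m"
          unfolding F_def
        proof (intro CollectI conjI)
          show "insert ?y (MM m) \<subseteq> X m" using yX MMX by blast
          have yd: "inf ?y x = 0" if "x \<in> MM m" for x
          proof -
            have "inf ?y x \<le> inf ww x" by (simp add: le_infI1)
            then have "inf ?y x \<le> 0" using i[OF that] by (rule ord_le_eq_trans)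
            moreover have "0 \<le> x" using MMpos[OF that] .
            ultimately show ?thesis using y0 by (simp add: antisym)
          qed
          show "pairwise (\<lambda>x y. inf x y = 0) (insert ?y (MM m))"
            unfolding pairwise_insert using MMd yd yM by (auto simp: inf_commute)
        qed
        then have "insert ?y (MM m) = MM m" using MM(2) by blast
        then show False using yM by blast
      qed
      define t where "t = inf ww d0"
      have t0: "0 \<le> t" unfolding t_def using ww0 d0 by simp
      have "t = 0"
      proof -
        have tA: "a \<le> s - (1 / ?r) *\<^sub>R t" if a: "a \<in> A" for a
        proof -
          have "inf t (pp m a) \<le> inf ww (pp m a)" unfolding t_def by (simp add: le_infI1)
          then have "inf t (pp m a) \<le> 0" using ii[OF a] by (rule ord_le_eq_trans)
          moreover have "0 \<le> inf t (pp m a)" using t0 unfolding pp_def by simp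
          ultimately have tp: "inf t (pp m a) = 0" by (simp add: antisym)
          have "t + pp m a = sup t (pp m a) + inf t (pp m a)" by (rule vl_add_eq_sup_inf)
          also have "\<dots> = sup t (pp m a)" using tp by simp
          also have "\<dots> \<le> d0" using pp_le[OF a] unfolding t_def by simp
          finally have "t + pp m a \<le> d0" .
          moreover have "d0 - ?r *\<^sub>R (s - a) \<le> pp m a" unfolding pp_def by simp
          ultimately have "t + (d0 - ?r *\<^sub>R (s - a)) \<le> d0" by (meson add_left_mono order_trans)
          then have "t \<le> ?r *\<^sub>R (s - a)" by (simp add: algebra_simps)
          then have "(1 / ?r) *\<^sub>R t \<le> (1 / ?r) *\<^sub>R (?r *\<^sub>R (s - a))" by (rule scaleR_left_mono) simp
          then have "(1 / ?r) *\<^sub>R t \<le> s - a" by simp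
          then show ?thesis by (simp add: algebra_simps)
        qed
        have "s \<le> s - (1 / ?r) *\<^sub>R t" using lub tA by blast
        then have "(1 / ?r) *\<^sub>R t \<le> 0" by simp
        then have "?r *\<^sub>R ((1 / ?r) *\<^sub>R t) \<le> ?r *\<^sub>R 0" by (rule scaleR_left_mono) simp
        then have "t \<le> 0" by simp
        then show ?thesis using t0 by simp
      qed
      have "inf (?r *\<^sub>R d0) ww = 0"
        by (rule vl_disj_scale) (use d0 ww0 \<open>t = 0\<close> in \<open>auto simp: t_def inf_commute\<close>)
      moreover have "ww \<le> ?r *\<^sub>R d0"
      proof -
        have "?r *\<^sub>R z \<le> ?r *\<^sub>R d0" using zd0 by (simp add: scaleR_left_mono)
        moreover have "0 \<le> ?r *\<^sub>R d0" using d0 by (simp add: scaleR_nonneg_nonneg)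
        moreover have "?r *\<^sub>R z - d0 \<le> ?r *\<^sub>R z" using d0 by simp
        ultimately show ?thesis unfolding ww_def by (meson le_sup_iff order_trans)
      qed
      ultimately have "ww = 0" by (simp add: inf_absorb2)
      then have "?r *\<^sub>R z - d0 \<le> 0" unfolding ww_def by (metis sup.cobounded1)
      then show ?thesis by simp
    qed
    have "z = 0"
    proof -
      have "\<forall>n::nat. of_nat n *\<^sub>R z \<le> d0"
      proof
        fix n :: nat show "of_nat n *\<^sub>R z \<le> d0"
          using key[of "n - 1"] d0 by (cases n) auto
      qed
      then show ?thesis using assms(1) z0 unfolding archimedean_vl_def by blast
    qed
    then show "s \<le> w" unfolding z_def by (metis sup.cobounded1 diff_le_0_iff_le)
  qed
  then show "\<exists>B. B \<subseteq> A \<and> countable B \<and> is_sup_wrt (\<le>) B s" using BA cB by blast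
qed


end
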